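(* Let $P\subset\mathbb{R}^d$ be a full-dimensional lattice polytope with codegree $a$. If $P$ is nearly Gorenstein, then $P=\lfloor aP\rfloor+\{P\}$ (Minkowski sum).
   Context: $\mathbf{k}$ is an infinite field. $P$ has facet presentation $P=\{x: n_F(x)\ge -h_F\ \forall \text{ facets } F\}$ with $n_F\in(\mathbb{Z}^d)^*$ primitive inner normals and $h_F\in\mathbb{Z}$. The codegree is $a=\min\{k\in\mathbb{Z}_{\ge1}: \mathrm{int}(kP)\cap\mathbb{Z}^d\ne\varnothing\}$. For a lattice polytope $Q$, $\lfloor Q\rfloor=\mathrm{conv}(\mathrm{int}(Q)\cap\mathbb{Z}^d)$ (floor polytope). The remainder polytope is $\{P\}=\mathrm{conv}\{x\in\mathbb{Z}^d: n_F(x)\ge (a-1)h_F-1\ \forall F\}$. The Minkowski sum is $A+B=\{x+y: x\in A, y\in B\}$. $P$ is nearly Gorenstein if its Ehrhart ring $A(P)=\mathbf{k}[\mathbf{t}^xs^k: k\in\mathbb{N}, x\in kP\cap\mathbb{Z}^d]$ (graded by $k$, graded maximal ideal $\mathbf{m}$, canonical module $\omega$) satisfies $\mathbf{m}\subseteq \mathrm{tr}(\omega)=\sum_{\phi\in\mathrm{Hom}(\omega,A(P))}\phi(\omega)$. *)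

theory Defs
  imports "HOL-Analysis.Analysis"
begin

definition lattice_pts :: "(real^'d) set" where
  "lattice_pts = {x. \<forall>i. x $ i \<in> \<int>}"

definition lattice_polytope :: "(real^'d) set \<Rightarrow> bool" where
  "lattice_polytope P \<longleftrightarrow> (\<exists>V. finite V \<and> V \<subseteq> lattice_pts \<and> P = convex hull V)"

definition dilate :: "real \<Rightarrow> (real^'d) set \<Rightarrow> (real^'d) set" where
  "dilate c P = (\<lambda>x. c *\<^sub>R x) ` P"

definition full_dim :: "(real^'d) set \<Rightarrow> bool" where
  "full_dim P \<longleftrightarrow> interior P \<noteq> {}"

definition primitive_vec :: "real^'d \<Rightarrow> bool" where
  "primitive_vec n \<longleftrightarrow> n \<in> lattice_pts \<and>
     (\<forall>k::int. (\<forall>i. \<exists>m::int. n $ i = of_int k * of_int m) \<longrightarrow> \<bar>k\<bar> = 1)"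

definition codegree :: "(real^'d) set \<Rightarrow> nat" where
  "codegree P = (LEAST k::nat. k \<ge> 1 \<and> interior (dilate (real k) P) \<inter> lattice_pts \<noteq> {})"

definition floor_polytope :: "(real^'d) set \<Rightarrow> (real^'d) set" where
  "floor_polytope Q = convex hull (interior Q \<inter> lattice_pts)"

definition facet_data :: "(real^'d) set \<Rightarrow> (real^'d) set \<Rightarrow> real^'d \<Rightarrow> int \<Rightarrow> bool" where
  "facet_data P F n h \<longleftrightarrow> F facet_of P \<and> primitive_vec n \<and>
     P \<subseteq> {y. n \<bullet> y \<ge> - of_int h} \<and> F \<subseteq> {y. n \<bullet> y = - of_int h}"

definition remainder_polytope :: "(real^'d) set \<Rightarrow> (real^'d) set" where
  "remainder_polytope P = convex hull {x \<in> lattice_pts.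
     \<forall>F n h. facet_data P F n h \<longrightarrow>
       n \<bullet> x \<ge> (real (codegree P) - 1) * of_int h - 1}"

definition minkowski_sum :: "(real^'d) set \<Rightarrow> (real^'d) set \<Rightarrow> (real^'d) set" where
  "minkowski_sum A B = {x + y | x y. x \<in> A \<and> y \<in> B}"

text \<open>Monomials t^x s^k are indexed by pairs (x,k) with x a lattice point of kP.
  Ring elements are finitely supported k-valued functions on these exponents.\<close>

definition ehr_exps :: "(real^'d) set \<Rightarrow> ((real^'d) \<times> nat) set" where
  "ehr_exps P = {(x,k). x \<in> lattice_pts \<and> x \<in> dilate (real k) P}"

definition supp :: "('a \<Rightarrow> 'k::zero) \<Rightarrow> 'a set" where
  "supp f = {m. f m \<noteq> 0}"

definition ehr_ring :: "(real^'d) set \<Rightarrow> ((real^'d) \<times> nat \<Rightarrow> 'k::field) set" where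
  "ehr_ring P = {f. finite (supp f) \<and> supp f \<subseteq> ehr_exps P}"

definition eadd :: "((real^'d) \<times> nat \<Rightarrow> 'k::field) \<Rightarrow> ((real^'d) \<times> nat \<Rightarrow> 'k) \<Rightarrow> ((real^'d) \<times> nat \<Rightarrow> 'k)" where
  "eadd f g = (\<lambda>m. f m + g m)"

definition ezero :: "(real^'d) \<times> nat \<Rightarrow> 'k::field" where
  "ezero = (\<lambda>m. 0)"

definition emult :: "((real^'d) \<times> nat \<Rightarrow> 'k::field) \<Rightarrow> ((real^'d) \<times> nat \<Rightarrow> 'k) \<Rightarrow> ((real^'d) \<times> nat \<Rightarrow> 'k)" where
  "emult f g = (\<lambda>(z,n). \<Sum>p \<in> {p \<in> supp f \<times> supp g.
        fst (fst p) + fst (snd p) = z \<and> snd (fst p) + snd (snd p) = n}.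
      f (fst p) * g (snd p))"

text \<open>Graded maximal ideal: elements with vanishing degree-0 part (degree 0 is only (0,0)).\<close>
definition ehr_max_ideal :: "(real^'d) set \<Rightarrow> ((real^'d) \<times> nat \<Rightarrow> 'k::field) set" where
  "ehr_max_ideal P = {f \<in> ehr_ring P. \<forall>x. f (x, 0) = 0}"

text \<open>Canonical module (Danilov--Stanley): the ideal spanned by the monomials in the
  interior of the cone over P, i.e. (x,k) with k \<ge> 1 and x in the interior of kP.\<close>
definition ehr_canonical :: "(real^'d) set \<Rightarrow> ((real^'d) \<times> nat \<Rightarrow> 'k::field) set" where
  "ehr_canonical P = {f \<in> ehr_ring P.
     supp f \<subseteq> {(x,k). k \<ge> 1 \<and> x \<in> interior (dilate (real k) P)}}"

definition ehr_hom_canonical ::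
  "(real^'d) set \<Rightarrow> (((real^'d) \<times> nat \<Rightarrow> 'k::field) \<Rightarrow> ((real^'d) \<times> nat \<Rightarrow> 'k)) \<Rightarrow> bool" where
  "ehr_hom_canonical P \<phi> \<longleftrightarrow>
     (\<forall>w \<in> ehr_canonical P. \<phi> w \<in> ehr_ring P) \<and>
     (\<forall>w1 \<in> ehr_canonical P. \<forall>w2 \<in> ehr_canonical P. \<phi> (eadd w1 w2) = eadd (\<phi> w1) (\<phi> w2)) \<and>
     (\<forall>a \<in> ehr_ring P. \<forall>w \<in> ehr_canonical P. \<phi> (emult a w) = emult a (\<phi> w))"

inductive_set ehr_trace :: "(real^'d) set \<Rightarrow> ((real^'d) \<times> nat \<Rightarrow> 'k::field) set"
  for P :: "(real^'d) set" where
  zero: "ezero \<in> ehr_trace P"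
| step: "ehr_hom_canonical P \<phi> \<Longrightarrow> w \<in> ehr_canonical P \<Longrightarrow> t \<in> ehr_trace P
          \<Longrightarrow> eadd (\<phi> w) t \<in> ehr_trace P"

definition nearly_gorenstein :: "'k::field itself \<Rightarrow> (real^'d) set \<Rightarrow> bool" where
  "nearly_gorenstein TYPE('k) P \<longleftrightarrow>
     ehr_max_ideal P \<subseteq> (ehr_trace P :: ((real^'d) \<times> nat \<Rightarrow> 'k) set)"

end

theory Submission
  imports Defs
begin

definition single :: "(real^'d) \<times> nat \<Rightarrow> 'k::field \<Rightarrow> ((real^'d) \<times> nat \<Rightarrow> 'k)" where
  "single u c = (\<lambda>m. if m = u then c else 0)"

lemma supp_single: "c \<noteq> 0 \<Longrightarrow> supp (single u c) = {u}"
  by (auto simp: supp_def single_def)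

lemma emult_comm: "emult f g = emult g f"
proof (rule ext, clarify)
  fix z n
  define A where "A = {p \<in> supp f \<times> supp g. fst (fst p) + fst (snd p) = z \<and> snd (fst p) + snd (snd p) = n}"
  define B where "B = {p \<in> supp g \<times> supp f. fst (fst p) + fst (snd p) = z \<and> snd (fst p) + snd (snd p) = n}"
  have "B = prod.swap ` A" by (auto simp: image_iff add.commute A_def B_def)
  moreover have "inj_on prod.swap A" by (metis inj_onI swap_swap)
  ultimately have "(\<Sum>p\<in>B. g (fst p) * f (snd p)) = (\<Sum>p\<in>A. g (snd p) * f (fst p))"
    by (simp add: sum.reindex)
  then show "emult f g (z, n) = emult g f (z, n)"
    by (simp add: emult_def mult.commute A_def B_def)
qed

lemma emult_single_shift:
  "emult (single (x', k') 1) g (z + x', n + k') = g (z, n)"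
proof -
  let ?S = "{p \<in> supp (single (x', k') (1::'a)) \<times> supp g. fst (fst p) + fst (snd p) = z + x' \<and> snd (fst p) + snd (snd p) = n + k'}"
  have S: "?S = (if g (z,n) = 0 then {} else {((x',k'),(z,n))})"
    by (auto simp: supp_def single_def add.commute)
  show ?thesis
    unfolding emult_def using S by (auto simp: single_def)
qed

lemma emult_nonzero:
  assumes "emult w h (z, n) \<noteq> 0"
  shows "\<exists>p1 \<in> supp w. \<exists>p2 \<in> supp h. fst p1 + fst p2 = z \<and> snd p1 + snd p2 = n"
proof -
  have "{p \<in> supp w \<times> supp h. fst (fst p) + fst (snd p) = z \<and> snd (fst p) + snd (snd p) = n} \<noteq> {}"
  proof
    define S where "S = {p \<in> supp w \<times> supp h. fst (fst p) + fst (snd p) = z \<and> snd (fst p) + snd (snd p) = n}"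
    assume "{p \<in> supp w \<times> supp h. fst (fst p) + fst (snd p) = z \<and> snd (fst p) + snd (snd p) = n} = {}"
    then have "S = {}" by (simp add: S_def)
    moreover have "emult w h (z,n) = (\<Sum>p\<in>S. w (fst p) * h (snd p))"
      unfolding emult_def S_def by simp
    ultimately show False using assms by simp
  qed
  then obtain p where "p \<in> supp w \<times> supp h" "fst (fst p) + fst (snd p) = z" "snd (fst p) + snd (snd p) = n"
    by blast
  then show ?thesis by (metis mem_Times_iff)
qed

lemma trace_nonzero:
  fixes t :: "(real^'d) \<times> nat \<Rightarrow> 'k::field"
  assumes "t \<in> ehr_trace P" "t m \<noteq> 0"
  shows "\<exists>\<phi> (w :: (real^'d) \<times> nat \<Rightarrow> 'k). ehr_hom_canonical P \<phi> \<and> w \<in> ehr_canonical P \<and> (\<phi> w m :: 'k) \<noteq> 0"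
  using assms
proof (induction rule: ehr_trace.induct)
  case zero then show ?case by (simp add: ezero_def)
next
  case (step \<phi> w t)
  show ?case
  proof (cases "\<phi> w m = 0")
    case True
    then show ?thesis using step by (simp add: eadd_def)
  next
    case False
    then show ?thesis using step by blast
  qed
qed

lemma hom_single:
  fixes \<phi> :: "((real^'d) \<times> nat \<Rightarrow> 'k::field) \<Rightarrow> ((real^'d) \<times> nat \<Rightarrow> 'k)"
  assumes hom: "ehr_hom_canonical P \<phi>"
  shows "finite S \<Longrightarrow> w \<in> ehr_canonical P \<Longrightarrow> supp w \<subseteq> S \<Longrightarrow> \<phi> w m \<noteq> 0
     \<Longrightarrow> \<exists>u \<in> supp w. \<phi> (single u (w u)) m \<noteq> 0"
proof (induction S arbitrary: w rule: finite_induct)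
  case empty
  have z: "ezero \<in> ehr_canonical P"
    by (simp add: ehr_canonical_def ehr_ring_def supp_def ezero_def)
  have "eadd ezero ezero = (ezero :: _ \<Rightarrow> 'k)" by (simp add: eadd_def ezero_def)
  then have "\<phi> ezero = eadd (\<phi> ezero) (\<phi> ezero)"
    using hom z unfolding ehr_hom_canonical_def by metis
  then have "\<phi> ezero m = \<phi> ezero m + \<phi> ezero m" by (metis eadd_def)
  then have "\<phi> ezero m = 0" by (metis add_cancel_right_right)
  moreover have "w = ezero" using empty by (auto simp: supp_def ezero_def)
  ultimately show ?case using empty by simp
next
  case (insert u S)
  define w1 where "w1 = (\<lambda>m. if m = u then 0 else w m)"
  define w2 where "w2 = single u (w u)"
  have ww: "w = eadd w1 w2" by (auto simp: eadd_def w1_def w2_def single_def)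
  have s1: "supp w1 \<subseteq> supp w" and s2: "supp w2 \<subseteq> supp w"
    by (auto simp: supp_def w1_def w2_def single_def)
  have c1: "w1 \<in> ehr_canonical P" and c2: "w2 \<in> ehr_canonical P"
    using insert.prems(1) s1 s2 by (auto simp: ehr_canonical_def ehr_ring_def intro: finite_subset)
  have "\<phi> w = eadd (\<phi> w1) (\<phi> w2)"
    using hom c1 c2 ww unfolding ehr_hom_canonical_def by metis
  then have "\<phi> w1 m \<noteq> 0 \<or> \<phi> w2 m \<noteq> 0" using insert.prems(3) by (auto simp: eadd_def)
  then show ?case
  proof
    assume h: "\<phi> w1 m \<noteq> 0"
    have "supp w1 \<subseteq> S" using insert.prems(2) by (auto simp: supp_def w1_def)
    then obtain u' where "u' \<in> supp w1" "\<phi> (single u' (w1 u')) m \<noteq> 0"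
      using insert.IH[OF c1 _ h] by blast
    moreover have "u' \<noteq> u" using \<open>u' \<in> supp w1\<close> by (auto simp: supp_def w1_def)
    ultimately show ?thesis using s1 by (auto simp: w1_def)
  next
    assume h: "\<phi> w2 m \<noteq> 0"
    have "w u \<noteq> 0"
    proof
      assume "w u = 0"
      then have "w2 = ezero" by (auto simp: w2_def single_def ezero_def)
      then show False using h insert.IH[of ezero] 
        by (simp add: supp_def ezero_def ehr_canonical_def ehr_ring_def)
    qed
    then have "u \<in> supp w" by (simp add: supp_def)
    then show ?thesis using h unfolding w2_def by blast
  qed
qed

lemma dilate_one: "dilate 1 P = P"
  by (simp add: dilate_def)

lemma ng_decomp:
  fixes P :: "(real^'d) set"
  assumes ng: "nearly_gorenstein TYPE('k::field) P" and v: "v \<in> lattice_pts" "v \<in> P"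
  shows "\<exists>x k. k \<ge> 1 \<and> x \<in> lattice_pts \<and> x \<in> interior (dilate (real k) P) \<and>
    (\<forall>x' k'. k' \<ge> 1 \<longrightarrow> x' \<in> lattice_pts \<longrightarrow> x' \<in> interior (dilate (real k') P) \<longrightarrow>
       (\<exists>s t. (s,t) \<in> ehr_exps P \<and> x + s = v + x' \<and> k + t = 1 + k'))"
proof -
  define E where "E = (single (v,1) (1::'k))"
  have vexp: "(v,1) \<in> ehr_exps P" using v by (simp add: ehr_exps_def dilate_one)
  have "E \<in> ehr_max_ideal P"
    using vexp by (simp add: E_def ehr_max_ideal_def ehr_ring_def supp_single) (simp add: single_def)
  then have "E \<in> ehr_trace P" using ng by (auto simp: nearly_gorenstein_def)
  moreover have "E (v,1) \<noteq> 0" by (simp add: E_def single_def)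
  ultimately obtain \<phi> and w :: "(real^'d) \<times> nat \<Rightarrow> 'k" where
    hom: "ehr_hom_canonical P \<phi>" and wc: "w \<in> ehr_canonical P" and nz: "\<phi> w (v,1) \<noteq> 0"
    using trace_nonzero by blast
  have fin: "finite (supp w)" using wc by (simp add: ehr_canonical_def ehr_ring_def)
  obtain u where u: "u \<in> supp w" and gnz: "\<phi> (single u (w u)) (v,1) \<noteq> 0"
    using hom_single[OF hom fin wc _ nz] by blast
  obtain x k where uxk: "u = (x,k)" by fastforce
  have uk: "k \<ge> 1" "x \<in> interior (dilate (real k) P)" "x \<in> lattice_pts"
    using wc u uxk by (auto simp: ehr_canonical_def ehr_ring_def ehr_exps_def)
  define wu where "wu = single u (w u)"
  have wu0: "w u \<noteq> 0" using u by (simp add: supp_def)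
  have supp_wu: "supp wu = {u}" using wu0 by (simp add: wu_def supp_single)
  have wuc: "wu \<in> ehr_canonical P" and wur: "wu \<in> ehr_ring P"
    using wc u supp_wu by (auto simp: ehr_canonical_def ehr_ring_def)
  have suppwu: "supp wu \<subseteq> {u}" by (auto simp: wu_def supp_def single_def)
  have "\<forall>x' k'. k' \<ge> 1 \<longrightarrow> x' \<in> lattice_pts \<longrightarrow> x' \<in> interior (dilate (real k') P) \<longrightarrow>
       (\<exists>s t. (s,t) \<in> ehr_exps P \<and> x + s = v + x' \<and> k + t = 1 + k')"
  proof (intro allI impI)
    fix x' k'
    assume k': "1 \<le> k'" "x' \<in> lattice_pts" "x' \<in> interior (dilate (real k') P)"
    define e' where "e' = single (x',k') (1::'k)"
    have "x' \<in> dilate (real k') P" using k'(3) interior_subset by blast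
    then have e'c: "e' \<in> ehr_canonical P" and e'r: "e' \<in> ehr_ring P"
      using k' by (auto simp: e'_def ehr_canonical_def ehr_ring_def supp_single ehr_exps_def)
    have "emult e' (\<phi> wu) = \<phi> (emult e' wu)"
      using hom e'r wuc unfolding ehr_hom_canonical_def by metis
    also have "\<dots> = \<phi> (emult wu e')" by (simp add: emult_comm)
    also have "\<dots> = emult wu (\<phi> e')"
      using hom wur e'c unfolding ehr_hom_canonical_def by metis
    finally have eq: "emult e' (\<phi> wu) = emult wu (\<phi> e')" .
    have "emult e' (\<phi> wu) (v + x', 1 + k') = \<phi> wu (v, 1)"
      unfolding e'_def by (rule emult_single_shift)
    then have "emult wu (\<phi> e') (v + x', 1 + k') \<noteq> 0" using eq gnz by (simp add: wu_def)
    then obtain p1 p2 where "p1 \<in> supp wu" "p2 \<in> supp (\<phi> e')" "fst p1 + fst p2 = v + x'"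
      "snd p1 + snd p2 = 1 + k'"
      using emult_nonzero by blast
    moreover have "\<phi> e' \<in> ehr_ring P" using hom e'c unfolding ehr_hom_canonical_def by blast
    ultimately show "\<exists>s t. (s,t) \<in> ehr_exps P \<and> x + s = v + x' \<and> k + t = 1 + k'"
      using suppwu uxk by (intro exI[of _ "fst p2"] exI[of _ "snd p2"]) (auto simp: ehr_ring_def)
  qed
  then show ?thesis using uk by blast
qed


lemma lat_inner: "n \<in> lattice_pts \<Longrightarrow> x \<in> lattice_pts \<Longrightarrow> n \<bullet> x \<in> \<int>"
  by (auto simp: lattice_pts_def inner_vec_def intro!: Ints_sum)

lemma lat_add: "x \<in> lattice_pts \<Longrightarrow> y \<in> lattice_pts \<Longrightarrow> x + y \<in> lattice_pts"
  by (auto simp: lattice_pts_def)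

lemma lat_diff: "x \<in> lattice_pts \<Longrightarrow> y \<in> lattice_pts \<Longrightarrow> x - y \<in> lattice_pts"
  by (auto simp: lattice_pts_def)

lemma lat_neg: "x \<in> lattice_pts \<Longrightarrow> - x \<in> lattice_pts"
  by (auto simp: lattice_pts_def)

lemma lat_scale: "x \<in> lattice_pts \<Longrightarrow> c \<in> \<int> \<Longrightarrow> c *\<^sub>R x \<in> lattice_pts"
  by (auto simp: lattice_pts_def)

lemma lat_sum: "(\<And>x. x \<in> S \<Longrightarrow> f x \<in> lattice_pts) \<Longrightarrow> sum f S \<in> lattice_pts"
  by (induction S rule: infinite_finite_induct) (auto simp: lat_add, auto simp: lattice_pts_def)

lemma lat_axis: "axis i 1 \<in> lattice_pts"
  by (auto simp: lattice_pts_def axis_def)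

lemma Ints_pos_ge1: "(x::real) \<in> \<int> \<Longrightarrow> 0 < x \<Longrightarrow> 1 \<le> x"
  by (metis Ints_cases of_int_0_less_iff of_int_1_le_iff zero_less_imp_eq_int int_one_le_iff_zero_less)

lemma int_orth:
  fixes X :: "(real^'d) set"
  assumes XL: "X \<subseteq> lattice_pts" and dX: "dim X < CARD('d)"
  shows "\<exists>w \<in> lattice_pts. w \<noteq> 0 \<and> (\<forall>x\<in>X. w \<bullet> x = 0)"
proof -
  obtain B where B: "B \<subseteq> X" "independent B" "X \<subseteq> span B"
    using maximal_independent_subset by blast
  have "dim B \<le> dim X" using B(1) by (rule dim_subset)
  moreover have "dim X \<le> dim B" using B(3) by (metis dim_span dim_subset)
  ultimately have cardB: "card B = dim X" using dim_eq_card_independent[OF B(2)] by simp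
  define Bas where "Bas = (cart_basis :: (real^'d) set)"
  obtain B' where B': "B \<subseteq> B'" "B' \<subseteq> B \<union> Bas" "independent B'" "B \<union> Bas \<subseteq> span B'"
    using maximal_independent_subset_extend[of B "B \<union> Bas"] B(2) by blast
  have finB': "finite B'" using B'(3) by (rule finiteI_independent)
  have "card B' \<le> CARD('d)" using independent_bound[OF B'(3)] by simp
  moreover have "CARD('d) \<le> card B'"
  proof -
    have "dim Bas \<le> dim B'" using B'(4) by (metis dim_span dim_subset le_sup_iff)
    moreover have "dim Bas = CARD('d)"
      using independent_cart_basis card_cart_basis
      by (metis Bas_def dependent_vec_eq dim_eq_card_independent)
    ultimately show ?thesis using dim_eq_card_independent[OF B'(3)] by simp
  qed
  ultimately have cardB': "card B' = CARD('d)" by simp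
  have B'L: "B' \<subseteq> lattice_pts"
    using B'(2) B(1) XL lat_axis unfolding Bas_def cart_basis_def by blast
  obtain e where e: "e \<in> B'" "e \<notin> B"
    using cardB cardB' dX B'(1) by (metis card_mono finB' less_le_not_le subsetI subset_antisym)
  define R where "R = B' - {e}"
  have cardR: "card R = CARD('d) - 1" using cardB' e finB' by (simp add: R_def)
  obtain i0 :: 'd where True by blast
  have "card (UNIV - {i0}) = CARD('d) - 1" by (simp add: card_Diff_singleton)
  then obtain \<beta> where bij: "bij_betw \<beta> (UNIV - {i0}) R"
    using cardR finB' by (metis R_def finite_Diff finite_same_card_bij finite)
  define M where "M = (\<lambda>z. (\<chi> i. if i = i0 then z else \<beta> i) :: real^'d^'d)"
  define w where "w = (\<chi> j. det (M (axis j 1)))"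
  have detlin: "det (M z) = w \<bullet> z" for z
  proof -
    have "det (M z) = det ((\<chi> i. if i = i0 then (\<Sum>j\<in>UNIV. (\<lambda>i j. z$j *s axis j 1) i j) else \<beta> i) :: real^'d^'d)"
      unfolding M_def by (simp only: basis_expansion)
    also have "\<dots> = (\<Sum>j\<in>UNIV. det ((\<chi> i. if i = i0 then z$j *s axis j 1 else \<beta> i) :: real^'d^'d))"
      by (rule det_linear_row_sum) simp
    also have "\<dots> = (\<Sum>j\<in>UNIV. z$j * det (M (axis j 1)))"
      unfolding M_def by (simp add: det_row_mul)
    also have "\<dots> = w \<bullet> z" by (simp add: w_def inner_vec_def mult.commute)
    finally show ?thesis .
  qed
  have RL: "\<beta> i \<in> lattice_pts" if "i \<noteq> i0" for i
    using bij B'L that by (auto simp: bij_betw_def R_def)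
  have wL: "w \<in> lattice_pts"
  proof -
    have ent: "M (axis j 1) $ i $ l \<in> \<int>" for i j l
      using RL[of i] by (auto simp: M_def axis_def lattice_pts_def)
    show ?thesis
      unfolding lattice_pts_def w_def det_def using ent by (auto intro!: Ints_sum Ints_prod Ints_mult)
  qed
  have wB: "w \<bullet> b = 0" if "b \<in> B" for b
  proof -
    have "b \<in> R" using that e B'(1) by (auto simp: R_def)
    then obtain i where i: "i \<noteq> i0" "\<beta> i = b" using bij by (auto simp: bij_betw_def)
    have "det (M b) = 0"
      by (rule det_identical_rows[OF i(1)[symmetric]]) (simp add: M_def row_def i vec_eq_iff)
    then show ?thesis using detlin by simp
  qed
  have "span B \<subseteq> {x. w \<bullet> x = 0}"
    using wB by (intro span_minimal subspace_hyperplane) auto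
  then have wX: "\<forall>x\<in>X. w \<bullet> x = 0" using B(3) by blast
  have "det (M e) \<noteq> 0"
  proof -
    have "rows (M e) = B'"
    proof -
      have "rows (M e) = insert e (\<beta> ` (UNIV - {i0}))"
        by (auto simp: rows_def M_def row_def image_iff)
      also have "\<dots> = B'" using bij e by (auto simp: bij_betw_def R_def)
      finally show ?thesis .
    qed
    then have "rank (M e) = CARD('d)"
      using cardB' dim_eq_card_independent[OF B'(3)] by (simp add: row_rank_def)
    then show ?thesis by (simp add: det_eq_0_rank)
  qed
  then have "w \<noteq> 0" using detlin by auto
  then show ?thesis using wL wX by blast
qed


lemma primitive_nz: "primitive_vec n \<Longrightarrow> n \<noteq> 0"
proof
  assume "primitive_vec n" "n = 0"
  then have "\<bar>(2::int)\<bar> = 1" unfolding primitive_vec_def by (metis mult_zero_right of_int_0 zero_index)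
  then show False by simp
qed

lemma bezout_fin:
  fixes f :: "'a \<Rightarrow> int"
  shows "finite I \<Longrightarrow> \<exists>c. (\<Sum>i\<in>I. c i * f i) = Gcd (f ` I)"
proof (induction I rule: finite_induct)
  case empty then show ?case by simp
next
  case (insert i I)
  then obtain c where c: "(\<Sum>i\<in>I. c i * f i) = Gcd (f ` I)" by blast
  obtain u v where uv: "u * f i + v * Gcd (f ` I) = gcd (f i) (Gcd (f ` I))"
    using bezout_int by blast
  define c' where "c' = (\<lambda>j. if j = i then u else v * c j)"
  have "(\<Sum>j\<in>I. c' j * f j) = (\<Sum>j\<in>I. v * (c j * f j))"
    using insert(2) by (intro sum.cong) (auto simp: c'_def)
  then have "(\<Sum>j\<in>insert i I. c' j * f j) = u * f i + (\<Sum>j\<in>I. v * (c j * f j))"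
    using insert by (simp add: c'_def)
  also have "\<dots> = u * f i + v * Gcd (f ` I)" by (simp add: sum_distrib_left[symmetric] c)
  finally show ?case using uv by auto
qed

lemma primitive_bezout:
  assumes "primitive_vec n"
  shows "\<exists>z \<in> lattice_pts. n \<bullet> z = 1"
proof -
  have nL: "n \<in> lattice_pts" using assms by (simp add: primitive_vec_def)
  define f where "f = (\<lambda>i. \<lfloor>n $ i\<rfloor>)"
  have nf: "n $ i = of_int (f i)" for i using nL by (simp add: f_def lattice_pts_def)
  define g where "g = Gcd (range f)"
  have "\<forall>i. \<exists>m::int. n $ i = of_int g * of_int m"
  proof
    fix i
    have "g dvd f i" by (simp add: g_def)
    then obtain m where "f i = g * m" by (auto elim: dvdE)
    then show "\<exists>m::int. n $ i = of_int g * of_int m" using nf by (metis of_int_mult)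
  qed
  then have "\<bar>g\<bar> = 1" using assms by (simp add: primitive_vec_def)
  then have g1: "g = 1" using Gcd_int_greater_eq_0[of "range f"] by (simp add: g_def)
  obtain c where c: "(\<Sum>i\<in>UNIV. c i * f i) = Gcd (f ` UNIV)" using bezout_fin[of UNIV f] by auto
  define z where "z = (\<chi> i. real_of_int (c i))"
  have zL: "z \<in> lattice_pts" by (simp add: z_def lattice_pts_def)
  have "n \<bullet> z = of_int (\<Sum>i\<in>UNIV. c i * f i)"
    by (simp add: inner_vec_def z_def nf mult.commute)
  also have "\<dots> = 1" using c g1 by (simp add: g_def)
  finally show ?thesis using zL by blast
qed

context
  fixes P :: "(real^'d) set" and V :: "(real^'d) set"
  assumes V: "finite V" "V \<subseteq> lattice_pts" "P = convex hull V" and fd: "interior P \<noteq> {}"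
begin

lemma polytopeP: "polytope P" using V by (auto simp: polytope_def)
lemma polyhedronP: "polyhedron P" using polytopeP by (rule polytope_imp_polyhedron)
lemma convexP: "convex P" using V by simp
lemma affdimP: "aff_dim P = int CARD('d)"
  using aff_dim_nonempty_interior[OF fd] by simp
lemma facet_affdim: "F facet_of P \<Longrightarrow> aff_dim F = int CARD('d) - 1"
  using affdimP by (simp add: facet_of_def)

lemma orth_parallel:
  assumes F: "F facet_of P" and a: "a \<noteq> 0" "F \<subseteq> {x. a \<bullet> x = b}" and p0: "p0 \<in> F"
    and w: "\<forall>x\<in>F. w \<bullet> (x - p0) = 0"
  shows "\<exists>c. w = c *\<^sub>R a"
proof -
  define T where "T = (+) (- p0) ` F"
  have "aff_dim F = int (dim T)"
    unfolding T_def by (rule aff_dim_eq_dim) (simp add: hull_inc p0)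
  then have dT: "dim T = CARD('d) - 1" using facet_affdim[OF F] by simp
  define H where "H = {x. a \<bullet> x = 0}"
  have TH: "T \<subseteq> H"
  proof
    fix y assume "y \<in> T"
    then obtain x where x: "x \<in> F" "y = - p0 + x" by (auto simp: T_def)
    then have "a \<bullet> x = b" "a \<bullet> p0 = b" using a p0 by auto
    then show "y \<in> H" using x by (simp add: H_def inner_diff_right)
  qed
  have dH: "dim H = CARD('d) - 1" using dim_hyperplane[OF a(1)] by (simp add: H_def)
  have "span T \<subseteq> H" using TH by (intro span_minimal) (auto simp: H_def subspace_hyperplane)
  then have "span T = H"
    by (intro subspace_dim_equal) (auto simp: H_def subspace_hyperplane dT dH[unfolded H_def])
  moreover have "span T \<subseteq> {x. w \<bullet> x = 0}"
    using w by (intro span_minimal subspace_hyperplane) (auto simp: T_def)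
  ultimately have wH: "\<And>x. a \<bullet> x = 0 \<Longrightarrow> w \<bullet> x = 0" by (auto simp: H_def)
  define c where "c = (w \<bullet> a) / (a \<bullet> a)"
  define v where "v = w - c *\<^sub>R a"
  have "a \<bullet> v = 0" using a by (simp add: v_def c_def inner_diff_right inner_commute)
  then have "w \<bullet> v = 0" "a \<bullet> v = 0" using wH by auto
  then have "v \<bullet> v = 0" by (simp add: v_def inner_diff_left)
  then have "v = 0" by simp
  then show ?thesis by (auto simp: v_def)
qed

lemma interior_pt: obtains q where "q \<in> interior P" using fd by blast

lemma facet_prop:
  assumes F: "F facet_of P"
    and a: "a \<noteq> 0" "P \<subseteq> {x. a \<bullet> x \<le> b}" "F \<subseteq> {x. a \<bullet> x = b}"
    and a': "a' \<noteq> 0" "P \<subseteq> {x. a' \<bullet> x \<le> b'}" "F \<subseteq> {x. a' \<bullet> x = b'}"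
  shows "\<exists>c>0. a' = c *\<^sub>R a \<and> b' = c * b"
proof -
  obtain p0 where p0: "p0 \<in> F" using F by (auto simp: facet_of_def)
  have "\<forall>x\<in>F. a' \<bullet> (x - p0) = 0" using a'(3) p0 by (auto simp: inner_diff_right)
  then obtain c where c: "a' = c *\<^sub>R a" using orth_parallel[OF F a(1) a(3) p0] by blast
  have bb: "b' = c * b" using p0 a(3) a'(3) c by auto
  obtain q where q: "q \<in> interior P" using fd by blast
  have "q \<in> interior {x. a \<bullet> x \<le> b}" using q a(2) interior_mono by blast
  then have "a \<bullet> q < b" using a(1) by simp
  have "q \<in> interior {x. a' \<bullet> x \<le> b'}" using q a'(2) interior_mono by blast
  then have "a' \<bullet> q < b'" using a'(1) by simp
  then have "c * (a \<bullet> q) < c * b" using c bb by simp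
  then have "c > 0" using \<open>a \<bullet> q < b\<close>
    by (metis mult_less_cancel_left_disj not_less_iff_gr_or_eq)
  then show ?thesis using c bb by blast
qed

lemma fd_halfspaces:
  assumes "facet_data P F n h"
  shows "- n \<noteq> 0" "P \<subseteq> {x. (- n) \<bullet> x \<le> of_int h}" "F \<subseteq> {x. (- n) \<bullet> x = of_int h}"
  using assms primitive_nz by (auto simp: facet_data_def)

lemma facet_data_prop:
  assumes "facet_data P F n h" "facet_data P F n' h'"
  shows "\<exists>c>0. n' = c *\<^sub>R n \<and> of_int h' = c * of_int h"
proof -
  have F: "F facet_of P" using assms by (simp add: facet_data_def)
  obtain c where "c > 0" "- n' = c *\<^sub>R (- n)" "of_int h' = c * of_int h"
    using facet_prop[OF F fd_halfspaces[OF assms(1)] fd_halfspaces[OF assms(2)]] by blast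
  then show ?thesis by (metis minus_equation_iff scaleR_minus_right)
qed

lemma facet_le:
  assumes "facet_data P F n h" "s \<in> dilate t P" "t \<ge> 0"
  shows "n \<bullet> s + t * of_int h \<ge> 0"
proof -
  obtain p where p: "p \<in> P" "s = t *\<^sub>R p" using assms(2) by (auto simp: dilate_def)
  have "n \<bullet> p \<ge> - of_int h" using assms(1) p(1) by (auto simp: facet_data_def)
  then have "t * (n \<bullet> p) \<ge> t * (- of_int h)" using assms(3) by (rule mult_left_mono)
  then show ?thesis using p by simp
qed

lemma facet_lt:
  assumes "facet_data P F n h" "y \<in> interior (dilate k P)" "k > 0"
  shows "n \<bullet> y + k * of_int h > 0"
proof -
  have "dilate k P \<subseteq> {x. n \<bullet> x \<ge> - (k * of_int h)}"
    using facet_le[OF assms(1)] assms(3) by force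
  then have "y \<in> interior {x. n \<bullet> x \<ge> - (k * of_int h)}" using assms(2) interior_mono by blast
  moreover have "n \<noteq> 0" using primitive_nz assms(1) unfolding facet_data_def by blast
  ultimately have "n \<bullet> y > - (k * of_int h)" using interior_halfspace_ge by blast
  then show ?thesis by simp
qed

lemma facet_lt_int:
  assumes "facet_data P F n h" "y \<in> interior (dilate (real k) P)" "k \<ge> 1" "y \<in> lattice_pts"
  shows "n \<bullet> y + real k * of_int h \<ge> 1"
proof -
  have "n \<bullet> y + real k * of_int h > 0" using facet_lt[OF assms(1,2)] assms(3) by simp
  moreover have "n \<bullet> y + real k * of_int h \<in> \<int>"
    using assms(1,4) lat_inner by (auto simp: facet_data_def primitive_vec_def)
  ultimately show ?thesis using Ints_pos_ge1 by blast
qed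

lemma facet_eq:
  assumes G: "facet_data P G n h" and F: "F facet_of P" and FH: "F \<subseteq> {x. n \<bullet> x = - of_int h}"
  shows "F = G"
proof -
  define E where "E = P \<inter> {x. n \<bullet> x = - of_int h}"
  have E: "E face_of P" unfolding E_def
    using G convexP by (intro face_of_Int_supporting_hyperplane_ge) (auto simp: facet_data_def)
  obtain q where q: "q \<in> interior P" using fd by blast
  have "n \<bullet> q + 1 * of_int h > 0" using facet_lt[OF G, of q 1] q by (simp add: dilate_one)
  then have "q \<notin> E" by (auto simp: E_def)
  then have EP: "E \<noteq> P" using q interior_subset by blast
  have ad: "aff_dim E < aff_dim P" using face_of_aff_dim_lt[OF convexP E EP] .
  have conv: "convex E" using E face_of_imp_convex by blast
  have sub: "X = E" if X: "X facet_of P" "X \<subseteq> E" for X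
  proof (rule ccontr)
    assume "X \<noteq> E"
    have "X face_of E" using X E by (meson face_of_subset facet_of_imp_face_of face_of_imp_subset)
    then have "aff_dim X < aff_dim E" using face_of_aff_dim_lt[OF conv] \<open>X \<noteq> E\<close> by blast
    then show False using ad X(1) by (simp add: facet_of_def)
  qed
  have "F = E" using sub[OF F] FH F by (auto simp: E_def dest: facet_of_imp_subset)
  moreover have "G = E" using sub G by (auto simp: E_def facet_data_def dest: facet_of_imp_subset)
  ultimately show ?thesis by simp
qed


lemma facet_data_exists:
  assumes F: "F facet_of P"
  shows "\<exists>n h. facet_data P F n h"
proof -
  obtain a b where ab: "a \<noteq> 0" "P \<subseteq> {x. a \<bullet> x \<le> b}" "F = P \<inter> {x. a \<bullet> x = b}"
    using facet_of_polyhedron[OF polyhedronP F] by blast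
  have "F face_of convex hull V" using F V(3) by (simp add: facet_of_def)
  then obtain W where W: "W \<subseteq> V" "F = convex hull W"
    using face_of_convex_hull_subset[OF finite_imp_compact[OF V(1)]] by blast
  have "W \<noteq> {}" using F W(2) by (auto simp: facet_of_def)
  then obtain p0 where p0: "p0 \<in> W" by blast
  have WL: "W \<subseteq> lattice_pts" using W(1) V(2) by blast
  have p0L: "p0 \<in> lattice_pts" using WL p0 by blast
  define X where "X = (\<lambda>x. x - p0) ` W"
  have XL: "X \<subseteq> lattice_pts" using WL p0 lat_diff by (auto simp: X_def)
  have "aff_dim F = aff_dim W" using W(2) by (simp add: aff_dim_convex_hull)
  also have "\<dots> = int (dim ((+) (- p0) ` W))" by (rule aff_dim_eq_dim) (simp add: hull_inc p0)
  also have "(+) (- p0) ` W = X" unfolding X_def by (rule image_cong) auto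
  finally have "dim X = CARD('d) - 1" using facet_affdim[OF F] by simp
  then have "dim X < CARD('d)" by simp
  then obtain w where w: "w \<in> lattice_pts" "w \<noteq> 0" "\<forall>x\<in>X. w \<bullet> x = 0"
    using int_orth[OF XL] by blast
  have "W \<subseteq> {x. w \<bullet> x = w \<bullet> p0}" using w(3) by (auto simp: X_def inner_diff_right)
  then have wF: "F \<subseteq> {x. w \<bullet> x = w \<bullet> p0}"
    unfolding W(2) by (intro hull_minimal convex_hyperplane)
  have p0F: "p0 \<in> F" unfolding W(2) by (rule hull_inc[OF p0])
  have "\<forall>x\<in>F. w \<bullet> (x - p0) = 0"
  proof
    fix x assume "x \<in> F"
    then have "w \<bullet> x = w \<bullet> p0" using wF by blast
    then show "w \<bullet> (x - p0) = 0" by (simp add: inner_diff_right)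
  qed
  then obtain c where c: "w = c *\<^sub>R a" using orth_parallel[OF F ab(1) _ p0F] ab(3) by blast
  have "c \<noteq> 0" using w(2) c by auto
  define n0 where "n0 = (if c < 0 then w else - w)"
  define c0 where "c0 = (if c < 0 then c else - c)"
  have n0: "n0 = c0 *\<^sub>R a" "c0 < 0" using c \<open>c \<noteq> 0\<close> by (auto simp: n0_def c0_def)
  have n0L: "n0 \<in> lattice_pts" using w(1) lat_neg by (auto simp: n0_def)
  have "n0 \<noteq> 0" using w(2) by (auto simp: n0_def)
  define f where "f = (\<lambda>i. \<lfloor>n0 $ i\<rfloor>)"
  have nf: "n0 $ i = of_int (f i)" for i using n0L by (simp add: f_def lattice_pts_def)
  define g where "g = Gcd (range f)"
  have "g \<noteq> 0"
  proof
    assume "g = 0"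
    then have "range f \<subseteq> {0}" by (simp add: g_def)
    then have "\<forall>i. f i = 0" by blast
    then have "n0 = 0" using nf by (simp add: vec_eq_iff)
    with \<open>n0 \<noteq> 0\<close> show False ..
  qed
  moreover have "g \<ge> 0" unfolding g_def by (rule Gcd_int_greater_eq_0)
  ultimately have gpos: "g > 0" by simp
  define n where "n = (1 / of_int g) *\<^sub>R n0"
  have gdvd: "g dvd f i" for i by (simp add: g_def)
  have nL: "n \<in> lattice_pts"
    unfolding lattice_pts_def mem_Collect_eq
  proof (rule allI)
    fix i
    obtain q where "f i = g * q" using gdvd[of i] by (auto elim: dvdE)
    then have "n $ i = of_int q" using gpos by (simp add: n_def nf)
    then show "n $ i \<in> \<int>" by simp
  qed
  have prim: "primitive_vec n"
    unfolding primitive_vec_def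
  proof (intro conjI nL allI impI)
    fix k :: int
    assume k: "\<forall>i. \<exists>m::int. n $ i = of_int k * of_int m"
    have "g * k dvd f i" for i
    proof -
      obtain m :: int where m: "n $ i = of_int k * of_int m" using k by blast
      have "n0 $ i = of_int g * n $ i" using gpos by (simp add: n_def)
      then have "of_int (f i) = (of_int (g * k * m) :: real)" using nf m by simp
      then have "f i = g * k * m" by linarith
      then show ?thesis by simp
    qed
    then have "\<And>b. b \<in> range f \<Longrightarrow> g * k dvd b" by blast
    then have "g * k dvd Gcd (range f)" by (rule Gcd_greatest)
    then have "g * k dvd g" by (simp add: g_def)
    then have "g * k dvd g * 1" by simp
    then have "k dvd 1" using \<open>g \<noteq> 0\<close> by (subst (asm) dvd_times_left_cancel_iff) auto
    then show "\<bar>k\<bar> = 1" by simp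
  qed
  define h where "h = - \<lfloor>n \<bullet> p0\<rfloor>"
  have "n \<bullet> p0 \<in> \<int>" using lat_inner[OF nL p0L] .
  then have hh: "of_int h = - (n \<bullet> p0)" by (simp add: h_def)
  define c1 where "c1 = c0 / of_int g"
  have nc1: "n = c1 *\<^sub>R a" using n0 by (simp add: n_def c1_def)
  have c1neg: "c1 < 0" using n0(2) gpos by (simp add: c1_def divide_neg_pos)
  have bp0: "a \<bullet> p0 = b" using p0F ab(3) by auto
  have "P \<subseteq> {y. n \<bullet> y \<ge> - of_int h}"
  proof
    fix y assume "y \<in> P"
    then have "a \<bullet> y \<le> b" using ab(2) by auto
    then have "c1 * b \<le> c1 * (a \<bullet> y)" using c1neg by (simp add: mult_left_mono_neg)
    then show "y \<in> {y. n \<bullet> y \<ge> - of_int h}" using hh nc1 bp0 by simp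
  qed
  moreover have "F \<subseteq> {y. n \<bullet> y = - of_int h}"
    using hh nc1 bp0 ab(3) by auto
  ultimately have "facet_data P F n h" using F prim by (simp add: facet_data_def)
  then show ?thesis by blast
qed

lemma repr:
  assumes H: "\<forall>G. G facet_of P \<longrightarrow> (\<exists>n h. facet_data P G n h \<and> - of_int h \<le> n \<bullet> y)"
  shows "y \<in> P"
proof -
  obtain Hs where Hs: "finite Hs" "P = affine hull P \<inter> \<Inter>Hs"
    and faces: "\<And>h. h \<in> Hs \<Longrightarrow> \<exists>a b. a \<noteq> 0 \<and> h = {x. a \<bullet> x \<le> b}"
    and min: "\<And>F'. F' \<subset> Hs \<Longrightarrow> P \<subset> (affine hull P) \<inter> \<Inter>F'"
    using polyhedronP by (simp add: polyhedron_Int_affine_minimal) meson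
  then obtain a b where ab: "\<And>h. h \<in> Hs \<Longrightarrow> a h \<noteq> 0 \<and> h = {x. a h \<bullet> x \<le> b h}"
    by metis
  have aff: "affine hull P = UNIV" using affine_hull_nonempty_interior[OF fd] .
  have "y \<in> hs" if hs: "hs \<in> Hs" for hs
  proof -
    define C where "C = P \<inter> {x. a hs \<bullet> x = b hs}"
    have "\<exists>h. h \<in> Hs \<and> C = P \<inter> {x. a h \<bullet> x = b h}" using hs C_def by blast
    then have Cf: "C facet_of P"
      by (simp only: facet_of_polyhedron_explicit[OF Hs(1) Hs(2) ab min])
    then obtain n h where nh: "facet_data P C n h" "- of_int h \<le> n \<bullet> y" using H by blast
    have Psub: "P \<subseteq> {x. a hs \<bullet> x \<le> b hs}" using Hs(2) hs ab by blast
    obtain c where c: "c > 0" "- n = c *\<^sub>R a hs" "of_int h = c * b hs"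
      using facet_prop[OF Cf _ Psub _ fd_halfspaces[OF nh(1)]] ab[OF hs] by (auto simp: C_def)
    have "- n \<bullet> y \<le> of_int h" using nh(2) by simp
    then have "c * (a hs \<bullet> y) \<le> c * b hs" using c by simp
    then have "a hs \<bullet> y \<le> b hs" using c(1) by simp
    then show "y \<in> hs" using ab[OF hs] by blast
  qed
  then show "y \<in> P" using Hs(2) aff by blast
qed

lemma repr_dilate:
  assumes k: "k > 0"
    and H: "\<forall>G. G facet_of P \<longrightarrow> (\<exists>n h. facet_data P G n h \<and> - (k * of_int h) \<le> n \<bullet> y)"
  shows "y \<in> dilate k P"
proof -
  have "(1/k) *\<^sub>R y \<in> P"
  proof (rule repr, intro allI impI)
    fix G assume "G facet_of P"
    then obtain n h where nh: "facet_data P G n h" "- (k * of_int h) \<le> n \<bullet> y" using H by blast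
    have "- of_int h \<le> (n \<bullet> y) / k" using nh(2) k by (simp add: field_simps)
    then show "\<exists>n h. facet_data P G n h \<and> - of_int h \<le> n \<bullet> ((1/k) *\<^sub>R y)"
      using nh(1) by auto
  qed
  moreover have "y = k *\<^sub>R ((1/k) *\<^sub>R y)" using k by simp
  ultimately show ?thesis unfolding dilate_def by blast
qed

lemma interior_crit:
  assumes k: "k > 0" and H: "\<forall>F n h. facet_data P F n h \<longrightarrow> n \<bullet> y + k * of_int h > 0"
  shows "y \<in> interior (dilate k P)"
proof -
  define D where "D G = (SOME nh. facet_data P G (fst nh) (snd nh))" for G
  have D: "facet_data P G (fst (D G)) (snd (D G))" if G: "G facet_of P" for G
  proof -
    obtain n h where "facet_data P G n h" using facet_data_exists[OF G] by blast
    then have "\<exists>nh. facet_data P G (fst nh) (snd nh)" by (intro exI[of _ "(n,h)"]) simp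
    then show ?thesis unfolding D_def by (rule someI_ex)
  qed
  define U where "U = (\<Inter>G\<in>{G. G facet_of P}. {x. 0 < fst (D G) \<bullet> x + k * of_int (snd (D G))})"
  have op: "open {x. 0 < fst (D G) \<bullet> x + k * of_int (snd (D G))}" for G
  proof -
    have "{x. 0 < fst (D G) \<bullet> x + k * of_int (snd (D G))} = {x. fst (D G) \<bullet> x > - (k * of_int (snd (D G)))}"
      by auto
    then show ?thesis using open_halfspace_gt by metis
  qed
  have "open U" unfolding U_def using finite_polytope_facets[OF polytopeP] op
    by (intro open_INT) blast+
  moreover have "y \<in> U" using H D by (auto simp: U_def)
  moreover have "U \<subseteq> dilate k P"
  proof
    fix x assume x: "x \<in> U"
    show "x \<in> dilate k P"
    proof (rule repr_dilate[OF k], intro allI impI)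
      fix G assume G: "G facet_of P"
      then have "0 < fst (D G) \<bullet> x + k * of_int (snd (D G))" using x by (auto simp: U_def)
      then show "\<exists>n h. facet_data P G n h \<and> - (k * of_int h) \<le> n \<bullet> x"
        using D[OF G] by (intro exI[of _ "fst (D G)"] exI[of _ "snd (D G)"]) auto
    qed
  qed
  ultimately show ?thesis using interior_maximal by blast
qed


lemma facet_vertices:
  assumes F: "F facet_of P"
  obtains W where "W \<subseteq> V" "F = convex hull W" "finite W" "W \<noteq> {}" "W \<subseteq> lattice_pts" "W \<subseteq> F"
proof -
  have "F face_of convex hull V" using F V(3) by (simp add: facet_of_def)
  then obtain W where W: "W \<subseteq> V" "F = convex hull W"
    using face_of_convex_hull_subset[OF finite_imp_compact[OF V(1)]] by blast
  have "W \<noteq> {}" using F W(2) by (auto simp: facet_of_def)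
  moreover have "finite W" using W(1) V(1) finite_subset by blast
  moreover have "W \<subseteq> lattice_pts" using W(1) V(2) by blast
  moreover have "W \<subseteq> F" unfolding W(2) by (rule hull_subset)
  ultimately show ?thesis using that W by blast
qed

lemma key:
  assumes Fd: "facet_data P F n h"
  shows "\<exists>u j. u \<in> lattice_pts \<and> j \<ge> 1 \<and> u \<in> interior (dilate (real j) P) \<and> n \<bullet> u + real j * of_int h = 1"
proof -
  have F: "F facet_of P" using Fd by (simp add: facet_data_def)
  obtain W where W: "W \<subseteq> V" "F = convex hull W" "finite W" "W \<noteq> {}" "W \<subseteq> lattice_pts" "W \<subseteq> F"
    using facet_vertices[OF F] by blast
  define m where "m = card W"
  have m1: "m \<ge> 1" using W(3,4) by (simp add: m_def Suc_le_eq card_gt_0_iff)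
  define f where "f = (\<Sum>v\<in>W. v)"
  have fL: "f \<in> lattice_pts" unfolding f_def using W(5) by (intro lat_sum) auto
  obtain z where z: "z \<in> lattice_pts" "n \<bullet> z = 1"
    using primitive_bezout[of n] Fd unfolding facet_data_def by blast
  define D where "D G = (SOME nh. facet_data P G (fst nh) (snd nh))" for G
  have D: "facet_data P G (fst (D G)) (snd (D G))" if G: "G facet_of P" for G
  proof -
    obtain n h where "facet_data P G n h" using facet_data_exists[OF G] by blast
    then have "\<exists>nh. facet_data P G (fst nh) (snd nh)" by (intro exI[of _ "(n,h)"]) simp
    then show ?thesis unfolding D_def by (rule someI_ex)
  qed
  have nW: "n \<bullet> v = - of_int h" if "v \<in> W" for v using Fd W(6) that by (auto simp: facet_data_def)
  define sG where "sG G = (\<Sum>v\<in>W. fst (D G) \<bullet> v + of_int (snd (D G)))" for G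
  have spos: "sG G > 0" if G: "G facet_of P" "G \<noteq> F" for G
  proof -
    have nn: "0 \<le> fst (D G) \<bullet> v + of_int (snd (D G))" if "v \<in> W" for v
      using D[OF G(1)] W(6) facet_of_imp_subset[OF F] that by (force simp: facet_data_def)
    then have "sG G \<ge> 0" unfolding sG_def by (intro sum_nonneg) auto
    moreover have "sG G \<noteq> 0"
    proof
      assume "sG G = 0"
      then have "\<forall>v\<in>W. fst (D G) \<bullet> v + of_int (snd (D G)) = 0"
        using sum_nonneg_eq_0_iff[OF W(3) nn] by (simp add: sG_def)
      then have "W \<subseteq> {x. fst (D G) \<bullet> x = - of_int (snd (D G))}" by (auto simp: algebra_simps)
      then have "F \<subseteq> {x. fst (D G) \<bullet> x = - of_int (snd (D G))}"
        unfolding W(2) by (intro hull_minimal convex_hyperplane)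
      then have "F = G" using facet_eq[OF D[OF G(1)] F] by blast
      then show False using G(2) by simp
    qed
    ultimately show ?thesis by simp
  qed
  have fin: "finite ({G. G facet_of P} - {F})" using finite_polytope_facets[OF polytopeP] by simp
  have "eventually (\<lambda>N. \<forall>G\<in>{G. G facet_of P} - {F}. 0 < fst (D G) \<bullet> z + real N * sG G) sequentially"
  proof (rule eventually_ball_finite[OF fin], rule ballI)
    fix G assume "G \<in> {G. G facet_of P} - {F}"
    then have sp: "sG G > 0" using spos by auto
    obtain N0 :: nat where N0: "- (fst (D G) \<bullet> z) / sG G < real N0" using reals_Archimedean2 by blast
    have "0 < fst (D G) \<bullet> z + real N * sG G" if "N \<ge> N0" for N
    proof -
      have "- (fst (D G) \<bullet> z) < real N0 * sG G" using pos_divide_less_eq[OF sp] N0 by (metis minus_divide_left)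
      also have "\<dots> \<le> real N * sG G" using that sp by (simp add: mult_right_mono)
      finally show ?thesis by simp
    qed
    then show "eventually (\<lambda>N. 0 < fst (D G) \<bullet> z + real N * sG G) sequentially"
      unfolding eventually_sequentially by blast
  qed
  moreover have "eventually (\<lambda>N. N \<ge> (1::nat)) sequentially" by (rule eventually_ge_at_top)
  ultimately have "eventually (\<lambda>N. N \<ge> 1 \<and> (\<forall>G\<in>{G. G facet_of P} - {F}. 0 < fst (D G) \<bullet> z + real N * sG G)) sequentially"
    by (simp add: eventually_conj)
  then obtain N where N1: "N \<ge> 1" and NG: "\<And>G. G facet_of P \<Longrightarrow> G \<noteq> F \<Longrightarrow> 0 < fst (D G) \<bullet> z + real N * sG G"
    unfolding eventually_sequentially by blast
  define u where "u = z + real N *\<^sub>R f"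
  define j where "j = N * m"
  have uL: "u \<in> lattice_pts" unfolding u_def by (intro lat_add z(1) lat_scale fL) simp
  have j1: "j \<ge> 1" using N1 m1 by (simp add: j_def)
  have lin: "a \<bullet> u + real j * c = a \<bullet> z + real N * (\<Sum>v\<in>W. a \<bullet> v + c)" for a c
    by (simp add: u_def j_def f_def inner_add_right inner_sum_right sum.distrib m_def algebra_simps)
  have eqF: "n \<bullet> u + real j * of_int h = 1"
    using lin[of n "of_int h"] nW z(2) by simp
  have "u \<in> interior (dilate (real j) P)"
  proof (rule interior_crit)
    show "real j > 0" using j1 by simp
    show "\<forall>F' n' h'. facet_data P F' n' h' \<longrightarrow> n' \<bullet> u + real j * of_int h' > 0"
    proof (intro allI impI)
      fix F' n' h' assume F'd: "facet_data P F' n' h'"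
      have F': "F' facet_of P" using F'd by (simp add: facet_data_def)
      show "n' \<bullet> u + real j * of_int h' > 0"
      proof (cases "F' = F")
        case True
        then obtain c where c: "c > 0" "n' = c *\<^sub>R n" "of_int h' = c * of_int h"
          using facet_data_prop[OF Fd] F'd by blast
        then have "n' \<bullet> u + real j * of_int h' = c * (n \<bullet> u + real j * of_int h)"
          by (simp add: algebra_simps)
        then show ?thesis using eqF c(1) by simp
      next
        case False
        then obtain c where c: "c > 0" "n' = c *\<^sub>R fst (D F')" "of_int h' = c * of_int (snd (D F'))"
          using facet_data_prop[OF D[OF F'] F'd] by blast
        then have "n' \<bullet> u + real j * of_int h' = c * (fst (D F') \<bullet> u + real j * of_int (snd (D F')))"
          by (simp add: algebra_simps)
        also have "\<dots> = c * (fst (D F') \<bullet> z + real N * sG F')"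
          using lin[of "fst (D F')" "of_int (snd (D F'))"] by (simp add: sG_def)
        finally show ?thesis using NG[OF F' False] c(1) by simp
      qed
    qed
  qed
  then show ?thesis using uL j1 eqF by blast
qed

lemma codegree_spec:
  shows "codegree P \<ge> 1" "\<exists>x0 \<in> lattice_pts. x0 \<in> interior (dilate (real (codegree P)) P)"
    and "\<And>k. k \<ge> 1 \<Longrightarrow> x \<in> lattice_pts \<Longrightarrow> x \<in> interior (dilate (real k) P) \<Longrightarrow> codegree P \<le> k"
proof -
  have "0 < aff_dim P" using affdimP by simp
  then obtain F where "F facet_of P" using polytope_facet_exists[OF polytopeP] by blast
  then obtain n h where "facet_data P F n h" using facet_data_exists by blast
  then obtain u j where uj: "u \<in> lattice_pts" "j \<ge> 1" "u \<in> interior (dilate (real j) P)"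
    using key by blast
  let ?Q = "\<lambda>k::nat. k \<ge> 1 \<and> interior (dilate (real k) P) \<inter> lattice_pts \<noteq> {}"
  have "?Q j" using uj by blast
  then have Q: "?Q (codegree P)" unfolding codegree_def by (rule LeastI)
  then show "codegree P \<ge> 1" by blast
  show "\<exists>x0 \<in> lattice_pts. x0 \<in> interior (dilate (real (codegree P)) P)" using Q by blast
  fix k assume "k \<ge> 1" "x \<in> lattice_pts" "x \<in> interior (dilate (real k) P)"
  then have "?Q k" by blast
  then show "codegree P \<le> k" unfolding codegree_def by (rule Least_le)
qed

end


lemma msum_eq: "minkowski_sum X Y = X + Y"
  by (auto simp: minkowski_sum_def set_plus_def)

theorem proposition3p5:
  fixes P :: "(real^'d) set"
  assumes "infinite (UNIV :: 'k::field set)"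
    and "lattice_polytope P"
    and "full_dim P"
    and "nearly_gorenstein TYPE('k) P"
  shows "P = minkowski_sum (floor_polytope (dilate (real (codegree P)) P)) (remainder_polytope P)"
proof -
  obtain V where V: "finite V" "V \<subseteq> lattice_pts" "P = convex hull V"
    using assms(2) by (auto simp: lattice_polytope_def)
  have fd: "interior P \<noteq> {}" using assms(3) by (simp add: full_dim_def)
  note facts = V(1) V(2) V(3) fd
  define a where "a = codegree P"
  have a1: "a \<ge> 1" using codegree_spec(1)[OF facts] by (simp add: a_def)
  define A where "A = interior (dilate (real a) P) \<inter> lattice_pts"
  define B where "B = {x \<in> lattice_pts. \<forall>F n h. facet_data P F n h \<longrightarrow>
       n \<bullet> x \<ge> (real a - 1) * of_int h - 1}"
  have rhs: "minkowski_sum (floor_polytope (dilate (real (codegree P)) P)) (remainder_polytope P)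
      = convex hull (A + B)"
  proof -
    have "floor_polytope (dilate (real (codegree P)) P) = convex hull A"
      by (simp add: floor_polytope_def A_def a_def)
    moreover have "remainder_polytope P = convex hull B"
      by (simp add: remainder_polytope_def B_def a_def)
    ultimately show ?thesis by (simp add: msum_eq convex_hull_set_plus)
  qed
  have conv: "convex P" using V(3) by simp
  have AB: "A + B \<subseteq> P"
  proof
    fix z assume "z \<in> A + B"
    then obtain x y where xy: "x \<in> A" "y \<in> B" "z = x + y" by (auto simp: set_plus_def)
    show "z \<in> P"
    proof (rule repr[OF facts], intro allI impI)
      fix G assume G: "G facet_of P"
      then obtain n h where nh: "facet_data P G n h" using facet_data_exists[OF facts] by blast
      have xA: "x \<in> interior (dilate (real a) P)" "x \<in> lattice_pts" using xy(1) by (auto simp: A_def)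
      have "n \<bullet> x + real a * of_int h \<ge> 1"
        using facet_lt_int[OF facts nh xA(1) a1 xA(2)] .
      moreover have "n \<bullet> y \<ge> (real a - 1) * of_int h - 1" using xy(2) nh unfolding B_def by blast
      moreover have "n \<bullet> z = n \<bullet> x + n \<bullet> y" using xy(3) by (simp add: inner_add_right)
      ultimately have "- of_int h \<le> n \<bullet> z" by (simp add: algebra_simps)
      then show "\<exists>n h. facet_data P G n h \<and> - of_int h \<le> n \<bullet> z" using nh by blast
    qed
  qed
  have VAB: "V \<subseteq> A + B"
  proof
    fix v assume vV: "v \<in> V"
    have vL: "v \<in> lattice_pts" using vV V(2) by blast
    have vP: "v \<in> P" unfolding V(3) by (rule hull_inc[OF vV])
    obtain x k where xk: "k \<ge> 1 \<and> x \<in> lattice_pts \<and> x \<in> interior (dilate (real k) P) \<and>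
    (\<forall>x' k'. k' \<ge> 1 \<longrightarrow> x' \<in> lattice_pts \<longrightarrow> x' \<in> interior (dilate (real k') P) \<longrightarrow>
       (\<exists>s t. (s,t) \<in> ehr_exps P \<and> x + s = v + x' \<and> k + t = 1 + k'))"
      using ng_decomp[OF assms(4) vL vP] by (elim exE) 
    then have k1: "k \<ge> 1" and xL: "x \<in> lattice_pts" and xi: "x \<in> interior (dilate (real k) P)"
      by simp_all
    have Q: "\<And>x' k'. k' \<ge> 1 \<Longrightarrow> x' \<in> lattice_pts \<Longrightarrow> x' \<in> interior (dilate (real k') P) \<Longrightarrow>
         (\<exists>s t. (s,t) \<in> ehr_exps P \<and> x + s = v + x' \<and> k + t = 1 + k')"
      using xk by simp
    obtain x0 where x0: "x0 \<in> lattice_pts" "x0 \<in> interior (dilate (real a) P)"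
      using codegree_spec(2)[OF facts] by (auto simp: a_def)
    have ka: "a \<le> k" using codegree_spec(3)[OF facts k1 xL xi] by (simp add: a_def)
    obtain s t where st: "(s,t) \<in> ehr_exps P" "x + s = v + x0" "k + t = 1 + a"
      using Q[OF a1 x0] by blast
    have star: "n \<bullet> (v - x) + (1 - real k) * of_int h \<ge> -1" if nh: "facet_data P F n h" for F n h
    proof -
      obtain u j where uj: "u \<in> lattice_pts" "j \<ge> 1" "u \<in> interior (dilate (real j) P)"
        "n \<bullet> u + real j * of_int h = 1"
        using key[OF facts nh] by blast
      obtain s' t' where st': "(s',t') \<in> ehr_exps P" "x + s' = v + u" "k + t' = 1 + j"
        using Q[OF uj(2) uj(1) uj(3)] by blast
      have "n \<bullet> s' + real t' * of_int h \<ge> 0"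
        using facet_le[OF facts nh] st'(1) by (auto simp: ehr_exps_def)
      moreover have "s' = v + u - x" using st'(2) by (simp add: algebra_simps)
      moreover have "real t' = 1 + real j - real k" using st'(3) by linarith
      ultimately have "n \<bullet> (v + u - x) + (1 + real j - real k) * of_int h \<ge> 0" by simp
      then show ?thesis using uj(4) by (simp add: inner_diff_right inner_add_right algebra_simps)
    qed
    have "k = a \<or> k = a + 1" using ka st(3) by linarith
    then show "v \<in> A + B"
    proof
      assume kk: "k = a"
      have "x \<in> A" using xL xi kk by (simp add: A_def)
      moreover have "v - x \<in> B"
        unfolding B_def using lat_diff[OF vL xL] star kk by (auto simp: algebra_simps)
      moreover have "v = x + (v - x)" by simp
      ultimately show ?thesis unfolding set_plus_def by blast
    next
      assume kk: "k = a + 1"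
      then have "t = 0" using st(3) by simp
      then have "s = 0" using st(1) by (auto simp: ehr_exps_def dilate_def)
      then have xv: "x = v + x0" using st(2) by simp
      have "x0 \<in> A" using x0 by (simp add: A_def)
      moreover have "v - x0 \<in> B"
        unfolding B_def
      proof (intro CollectI conjI allI impI)
        show "v - x0 \<in> lattice_pts" using lat_diff[OF vL x0(1)] .
        fix F n h assume nh: "facet_data P F n h"
        have "n \<bullet> (v - x) + (1 - real k) * of_int h \<ge> -1" using star[OF nh] .
        then have "- (n \<bullet> x0) - real a * of_int h \<ge> -1"
          using xv kk by (simp add: inner_diff_right inner_add_right algebra_simps)
        moreover have "n \<bullet> v \<ge> - of_int h" using nh vP by (auto simp: facet_data_def)
        ultimately show "n \<bullet> (v - x0) \<ge> (real a - 1) * of_int h - 1"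
          by (simp add: inner_diff_right algebra_simps)
      qed
      moreover have "v = x0 + (v - x0)" by simp
      ultimately show ?thesis unfolding set_plus_def by blast
    qed
  qed
  have "P \<subseteq> convex hull (A + B)"
    unfolding V(3) using VAB by (rule hull_mono)
  moreover have "convex hull (A + B) \<subseteq> P" using AB conv by (rule hull_minimal)
  ultimately show ?thesis using rhs by auto
qed

end
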